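(* Let $T$ be a tree and let $u$ be a support vertex of $T$ such that $|N(u)\setminus L_u|=1$. Let $T'=T-(L_u\cup\{u\})$. Then $\gamma^{DLD}(T')=\gamma^{DLD}(T)-|L_u|$.
   Context: For a vertex $u$, $N(u)$ is its set of neighbours and $N[u]=N(u)\cup\{u\}$. A code in a graph with vertex set $V$ is a non-empty subset $C\subseteq V$; $I(C;u)=N[u]\cap C$. A code $C$ is solid-locating-dominating if $I(C;u)\ne\emptyset$ for every $u\in V\setminus C$ and $I(C;u)\not\subseteq I(C;v)$ for all distinct $u,v\in V\setminus C$; $\gamma^{DLD}$ denotes the minimum size of such a code. A leaf is a vertex of degree one; a support vertex is a vertex adjacent to at least one leaf; for a support vertex $u$, $L_u$ is the set of leaves adjacent to $u$. $T-X$ denotes the subgraph induced by $V(T)\setminus X$. *)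

theory Defs
  imports Main
begin

definition sgraph :: "'a set \<Rightarrow> ('a \<Rightarrow> 'a \<Rightarrow> bool) \<Rightarrow> bool" where
  "sgraph V E \<longleftrightarrow> finite V \<and> (\<forall>u v. E u v \<longrightarrow> u \<in> V \<and> v \<in> V)
      \<and> (\<forall>u v. E u v \<longrightarrow> E v u) \<and> (\<forall>u. \<not> E u u)"

definition nbhd :: "'a set \<Rightarrow> ('a \<Rightarrow> 'a \<Rightarrow> bool) \<Rightarrow> 'a \<Rightarrow> 'a set" where
  "nbhd V E u = {v \<in> V. E u v}"

definition cnbhd :: "'a set \<Rightarrow> ('a \<Rightarrow> 'a \<Rightarrow> bool) \<Rightarrow> 'a \<Rightarrow> 'a set" where
  "cnbhd V E u = insert u (nbhd V E u)"

definition connected_graph :: "'a set \<Rightarrow> ('a \<Rightarrow> 'a \<Rightarrow> bool) \<Rightarrow> bool" where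
  "connected_graph V E \<longleftrightarrow>
     (\<forall>u\<in>V. \<forall>v\<in>V. (\<lambda>x y. x \<in> V \<and> y \<in> V \<and> E x y)\<^sup>*\<^sup>* u v)"

definition is_cycle :: "'a set \<Rightarrow> ('a \<Rightarrow> 'a \<Rightarrow> bool) \<Rightarrow> 'a list \<Rightarrow> bool" where
  "is_cycle V E cs \<longleftrightarrow> length cs \<ge> 3 \<and> distinct cs \<and> set cs \<subseteq> V
      \<and> (\<forall>i. Suc i < length cs \<longrightarrow> E (cs ! i) (cs ! Suc i))
      \<and> E (last cs) (hd cs)"

definition tree :: "'a set \<Rightarrow> ('a \<Rightarrow> 'a \<Rightarrow> bool) \<Rightarrow> bool" where
  "tree V E \<longleftrightarrow> sgraph V E \<and> V \<noteq> {} \<and> connected_graph V E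
      \<and> \<not> (\<exists>cs. is_cycle V E cs)"

definition leaf :: "'a set \<Rightarrow> ('a \<Rightarrow> 'a \<Rightarrow> bool) \<Rightarrow> 'a \<Rightarrow> bool" where
  "leaf V E v \<longleftrightarrow> v \<in> V \<and> card (nbhd V E v) = 1"

definition support_vertex :: "'a set \<Rightarrow> ('a \<Rightarrow> 'a \<Rightarrow> bool) \<Rightarrow> 'a \<Rightarrow> bool" where
  "support_vertex V E u \<longleftrightarrow> u \<in> V \<and> (\<exists>v \<in> nbhd V E u. leaf V E v)"

definition leaves_at :: "'a set \<Rightarrow> ('a \<Rightarrow> 'a \<Rightarrow> bool) \<Rightarrow> 'a \<Rightarrow> 'a set" where
  "leaves_at V E u = {v \<in> nbhd V E u. leaf V E v}"

definition is_DLD :: "'a set \<Rightarrow> ('a \<Rightarrow> 'a \<Rightarrow> bool) \<Rightarrow> 'a set \<Rightarrow> bool" where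
  "is_DLD V E C \<longleftrightarrow> C \<noteq> {} \<and> C \<subseteq> V
     \<and> (\<forall>u \<in> V - C. cnbhd V E u \<inter> C \<noteq> {})
     \<and> (\<forall>u \<in> V - C. \<forall>v \<in> V - C. u \<noteq> v \<longrightarrow>
           \<not> (cnbhd V E u \<inter> C \<subseteq> cnbhd V E v \<inter> C))"

definition gamma_DLD :: "'a set \<Rightarrow> ('a \<Rightarrow> 'a \<Rightarrow> bool) \<Rightarrow> nat" where
  "gamma_DLD V E = Min {card C | C. is_DLD V E C}"

end

theory Submission
  imports Defs
begin

lemma DLD_mono:
  assumes "is_DLD V E C" "C \<subseteq> D" "D \<subseteq> V" shows "is_DLD V E D"
proof -
  have "D \<noteq> {}" using assms unfolding is_DLD_def by auto
  moreover have "\<forall>x \<in> V - D. cnbhd V E x \<inter> D \<noteq> {}"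
    using assms unfolding is_DLD_def by blast
  moreover have "\<forall>a \<in> V - D. \<forall>b \<in> V - D. a \<noteq> b \<longrightarrow>
           \<not> (cnbhd V E a \<inter> D \<subseteq> cnbhd V E b \<inter> D)"
  proof (intro ballI impI)
    fix a b assume a: "a \<in> V - D" and b: "b \<in> V - D" and ab: "a \<noteq> b"
    from assms(1) a b ab assms(2) obtain z where "z \<in> cnbhd V E a \<inter> C" "z \<notin> cnbhd V E b \<inter> C"
      unfolding is_DLD_def by blast
    then show "\<not> (cnbhd V E a \<inter> D \<subseteq> cnbhd V E b \<inter> D)" using assms(2) by blast
  qed
  ultimately show ?thesis using assms(3) unfolding is_DLD_def by blast
qed

lemma DLD_sep: "is_DLD V E C \<Longrightarrow> a \<in> V - C \<Longrightarrow> b \<in> V - C \<Longrightarrow> a \<noteq> b \<Longrightarrow>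
   \<not> (cnbhd V E a \<inter> C \<subseteq> cnbhd V E b \<inter> C)"
  unfolding is_DLD_def by blast

lemma cnbhd_sub: "v \<in> V \<Longrightarrow> cnbhd V E v \<subseteq> V"
  unfolding cnbhd_def nbhd_def by auto

lemma DLD_restrict:
  assumes "is_DLD V E C" "V' \<subseteq> V" "V' \<noteq> {}"
    "\<forall>v\<in>V'-C. cnbhd V E v \<inter> C = cnbhd V' E v \<inter> (C \<inter> V')"
  shows "is_DLD V' E (C \<inter> V')"
proof -
  have ne: "C \<inter> V' \<noteq> {}"
  proof
    assume h: "C \<inter> V' = {}"
    obtain v where v: "v \<in> V'" using assms(3) by blast
    then have "v \<in> V - C" using h assms(2) by blast
    then have "cnbhd V E v \<inter> C \<noteq> {}" using assms(1) unfolding is_DLD_def by blast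
    then show False using assms(4) v h by auto
  qed
  have d: "\<forall>x \<in> V' - C \<inter> V'. cnbhd V' E x \<inter> (C \<inter> V') \<noteq> {}"
  proof
    fix x assume x: "x \<in> V' - C \<inter> V'"
    then have "x \<in> V - C" using assms(2) by auto
    then have "cnbhd V E x \<inter> C \<noteq> {}" using assms(1) unfolding is_DLD_def by blast
    then show "cnbhd V' E x \<inter> (C \<inter> V') \<noteq> {}" using assms(4) x by auto
  qed
  have s: "\<forall>a \<in> V' - C \<inter> V'. \<forall>b \<in> V' - C \<inter> V'. a \<noteq> b \<longrightarrow>
           \<not> (cnbhd V' E a \<inter> (C \<inter> V') \<subseteq> cnbhd V' E b \<inter> (C \<inter> V'))"
  proof (intro ballI impI)
    fix a b assume a: "a \<in> V' - C \<inter> V'" and b: "b \<in> V' - C \<inter> V'" and ab: "a \<noteq> b"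
    have "a \<in> V - C" "b \<in> V - C" using a b assms(2) by auto
    then have "\<not> (cnbhd V E a \<inter> C \<subseteq> cnbhd V E b \<inter> C)" using ab assms(1) unfolding is_DLD_def by blast
    moreover have "cnbhd V E a \<inter> C = cnbhd V' E a \<inter> (C \<inter> V')"
       "cnbhd V E b \<inter> C = cnbhd V' E b \<inter> (C \<inter> V')" using assms(4) a b by auto
    ultimately show "\<not> (cnbhd V' E a \<inter> (C \<inter> V') \<subseteq> cnbhd V' E b \<inter> (C \<inter> V'))"
      by simp
  qed
  show ?thesis using ne d s unfolding is_DLD_def by blast
qed

lemma DLD_glue:
  assumes "is_DLD V' E C'" "V' \<subseteq> V" "D \<subseteq> V" "D \<inter> V' = C'"
    "\<forall>v\<in>V'-C'. cnbhd V E v \<inter> D = cnbhd V' E v \<inter> C'"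
    "V - D = (V' - C') \<union> {z}" "z \<notin> V'" "cnbhd V E z \<inter> D \<noteq> {}"
    "cnbhd V E z \<inter> D \<inter> V' = {}"
  shows "is_DLD V E D"
proof -
  have ne: "D \<noteq> {}" using assms(1,4) unfolding is_DLD_def by auto
  have d: "\<forall>x \<in> V - D. cnbhd V E x \<inter> D \<noteq> {}"
    using assms(1,5,6,8) unfolding is_DLD_def by auto
  have I': "\<And>b. b \<in> V' - C' \<Longrightarrow> cnbhd V E b \<inter> D \<subseteq> V' \<and> cnbhd V E b \<inter> D \<noteq> {}"
    using assms(1,5) cnbhd_sub[of _ V' E] unfolding is_DLD_def by blast
  have s: "\<forall>a \<in> V - D. \<forall>b \<in> V - D. a \<noteq> b \<longrightarrow>
           \<not> (cnbhd V E a \<inter> D \<subseteq> cnbhd V E b \<inter> D)"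
  proof (intro ballI impI)
    fix a b assume a: "a \<in> V - D" and b: "b \<in> V - D" and ab: "a \<noteq> b"
    show "\<not> (cnbhd V E a \<inter> D \<subseteq> cnbhd V E b \<inter> D)"
    proof (cases "a = z")
      case True
      then have "b \<in> V' - C'" using b ab assms(6) by auto
      then show ?thesis using I'[of b] True assms(8,9) by blast
    next
      case False
      then have a': "a \<in> V' - C'" using a assms(6) by auto
      show ?thesis
      proof (cases "b = z")
        case True
        then show ?thesis using I'[of a] a' assms(9) by blast
      next
        case False
        then have "b \<in> V' - C'" using b assms(6) by auto
        then show ?thesis using a' ab assms(1,5) unfolding is_DLD_def by auto
      qed
    qed
  qed
  show ?thesis using ne d s assms(3) unfolding is_DLD_def by blast
qed

lemma gamma_le: "finite V \<Longrightarrow> is_DLD V E C \<Longrightarrow> gamma_DLD V E \<le> card C"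
proof -
  assume f: "finite V" and c: "is_DLD V E C"
  have "{card C | C. is_DLD V E C} \<subseteq> card ` Pow V" unfolding is_DLD_def by auto
  then have "finite {card C | C. is_DLD V E C}" using f by (meson finite_Pow_iff finite_imageI finite_subset)
  then show ?thesis unfolding gamma_DLD_def using c by (auto intro: Min_le)
qed

lemma gamma_ex: "finite V \<Longrightarrow> V \<noteq> {} \<Longrightarrow> \<exists>C. is_DLD V E C \<and> card C = gamma_DLD V E"
proof -
  assume f: "finite V" and ne: "V \<noteq> {}"
  have "{card C | C. is_DLD V E C} \<subseteq> card ` Pow V" unfolding is_DLD_def by auto
  then have fin: "finite {card C | C. is_DLD V E C}" using f by (meson finite_Pow_iff finite_imageI finite_subset)
  have "is_DLD V E V" using ne unfolding is_DLD_def by auto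
  then have "{card C | C. is_DLD V E C} \<noteq> {}" by auto
  from Min_in[OF fin this] show ?thesis unfolding gamma_DLD_def by auto
qed


lemma key:
  fixes V :: "'a set" and E L u w
  assumes fin: "finite V" and sg: "sgraph V E" and uV: "u \<in> V" and wV: "w \<in> V"
    and LV: "L \<subseteq> V" and Lne: "L \<noteq> {}" and uL: "u \<notin> L" and wL: "w \<notin> L" and wu: "w \<noteq> u"
    and Euw: "E u w" and Lnb: "\<forall>x\<in>L. nbhd V E x = {u}"
    and unb: "\<forall>v\<in>V. E u v \<longrightarrow> v \<in> L \<or> v = w"
  shows "gamma_DLD (V - (L \<union> {u})) E = gamma_DLD V E - card L"
proof -
  define V' where "V' = V - (L \<union> {u})"
  have sym: "\<And>a b. E a b \<Longrightarrow> E b a" and irr: "\<And>a. \<not> E a a" and inV: "\<And>a b. E a b \<Longrightarrow> a \<in> V \<and> b \<in> V"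
    using sg unfolding sgraph_def by blast+
  have V'V: "V' \<subseteq> V" and wV': "w \<in> V'" using wV wL wu unfolding V'_def by auto
  have finV': "finite V'" using fin V'V finite_subset by blast
  have finL: "finite L" using fin LV finite_subset by blast
  have F4: "\<And>v. v \<in> V' \<Longrightarrow> v \<noteq> w \<Longrightarrow> \<not> E v u"
    using unb sym V'V unfolding V'_def by blast
  have F5: "\<And>v x. v \<in> V' \<Longrightarrow> x \<in> L \<Longrightarrow> \<not> E v x"
  proof
    fix v x assume v: "v \<in> V'" and x: "x \<in> L" and e: "E v x"
    then have "v \<in> nbhd V E x" using sym inV unfolding nbhd_def by blast
    then show False using Lnb x v unfolding V'_def by auto
  qed
  have C1: "\<And>v. v \<in> V' \<Longrightarrow> v \<noteq> w \<Longrightarrow> cnbhd V E v = cnbhd V' E v"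
    unfolding cnbhd_def nbhd_def using F4 F5 unfolding V'_def by auto
  have C2: "cnbhd V E w = insert u (cnbhd V' E w)"
    unfolding cnbhd_def nbhd_def using F5[OF wV'] Euw sym uV unfolding V'_def by auto
  have C3: "\<And>x. x \<in> L \<Longrightarrow> cnbhd V E x = {x, u}"
    unfolding cnbhd_def using Lnb by auto
  have ELu: "\<And>x. x \<in> L \<Longrightarrow> E u x"
    using Lnb sym unfolding nbhd_def by blast
  have C4: "cnbhd V E u = insert u (insert w L)"
    unfolding cnbhd_def nbhd_def using unb ELu Euw LV wV by auto
  have cardsplit: "\<And>C. C \<subseteq> V \<Longrightarrow> card C = card (C \<inter> V') + card (C \<inter> (L \<union> {u}))"
  proof -
    fix C assume "C \<subseteq> V"
    then have e: "C = (C \<inter> V') \<union> (C \<inter> (L \<union> {u}))" unfolding V'_def by auto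
    have f: "finite C" using \<open>C \<subseteq> V\<close> fin finite_subset by blast
    have d: "(C \<inter> V') \<inter> (C \<inter> (L \<union> {u})) = {}" unfolding V'_def by auto
    have "card ((C \<inter> V') \<union> (C \<inter> (L \<union> {u}))) = card (C \<inter> V') + card (C \<inter> (L \<union> {u}))"
      using card_Un_disjoint[OF _ _ d] f by auto
    then show "card C = card (C \<inter> V') + card (C \<inter> (L \<union> {u}))" using e by simp
  qed
  obtain C where C: "is_DLD V E C" "card C = gamma_DLD V E"
    using gamma_ex[OF fin] uV by blast
  obtain C' where C': "is_DLD V' E C'" "card C' = gamma_DLD V' E"
    using gamma_ex[OF finV'] wV' by blast
  have CV: "C \<subseteq> V" using C unfolding is_DLD_def by blast
  have C'V: "C' \<subseteq> V'" using C' unfolding is_DLD_def by blast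
  have lower: "gamma_DLD V' E + card L \<le> gamma_DLD V E"
  proof (cases "u \<in> C")
    case False
    have LC: "L \<subseteq> C"
    proof
      fix x assume x: "x \<in> L"
      show "x \<in> C"
      proof (rule ccontr)
        assume "x \<notin> C"
        then have "x \<in> V - C" using x LV by auto
        then have "cnbhd V E x \<inter> C \<noteq> {}" using C unfolding is_DLD_def by blast
        then show False using C3[OF x] False \<open>x \<notin> C\<close> by auto
      qed
    qed
    have "is_DLD V' E (C \<inter> V')"
    proof (rule DLD_restrict[OF C(1) V'V])
      show "V' \<noteq> {}" using wV' by auto
      show "\<forall>v\<in>V' - C. cnbhd V E v \<inter> C = cnbhd V' E v \<inter> (C \<inter> V')"
      proof
        fix v assume v: "v \<in> V' - C"
        show "cnbhd V E v \<inter> C = cnbhd V' E v \<inter> (C \<inter> V')"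
        proof (cases "v = w")
          case True then show ?thesis using C2 False cnbhd_sub[OF wV', of E] by auto
        next
          case f: False then show ?thesis using C1[of v] v cnbhd_sub[of v V' E] by auto
        qed
      qed
    qed
    then have "gamma_DLD V' E \<le> card (C \<inter> V')" using gamma_le[OF finV'] by blast
    moreover have "C \<inter> (L \<union> {u}) = L" using LC False by auto
    then have "card (C \<inter> (L \<union> {u})) = card L" by simp
    ultimately show ?thesis using cardsplit[OF CV] C(2) by linarith
  next
    case True
    define D where "D = insert w C"
    have DD: "is_DLD V E D" using DLD_mono[OF C(1)] CV wV unfolding D_def by auto
    have "is_DLD V' E (D \<inter> V')"
    proof (rule DLD_restrict[OF DD V'V])
      show "V' \<noteq> {}" using wV' by auto
      show "\<forall>v\<in>V' - D. cnbhd V E v \<inter> D = cnbhd V' E v \<inter> (D \<inter> V')"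
      proof
        fix v assume v: "v \<in> V' - D"
        then have "v \<noteq> w" unfolding D_def by auto
        then show "cnbhd V E v \<inter> D = cnbhd V' E v \<inter> (D \<inter> V')" using C1[of v] v cnbhd_sub[of v V' E] by auto
      qed
    qed
    then have g: "gamma_DLD V' E \<le> card (D \<inter> V')" using gamma_le[OF finV'] by blast
    have finC: "finite C" using CV fin finite_subset by blast
    show ?thesis
    proof (cases "L \<subseteq> C")
      case True
      have "D \<inter> V' = insert w (C \<inter> V')" unfolding D_def using wV' by auto
      then have "card (D \<inter> V') \<le> card (C \<inter> V') + 1" using finC
        by (simp add: card_insert_le_m1 card_insert_if)
      moreover have "C \<inter> (L \<union> {u}) = insert u L" using True \<open>u \<in> C\<close> by auto
      then have "card (C \<inter> (L \<union> {u})) = card L + 1" using finL uL by simp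
      ultimately show ?thesis using g cardsplit[OF CV] C(2) by linarith
    next
      case False
      then obtain x where x: "x \<in> L" "x \<notin> C" by blast
      have xV: "x \<in> V - C" using x LV by auto
      have Ix: "cnbhd V E x \<inter> C = {u}" using C3[OF x(1)] x(2) \<open>u \<in> C\<close> by auto
      have wC: "w \<in> C"
      proof (rule ccontr)
        assume "w \<notin> C"
        then have "w \<in> V - C" using wV by auto
        moreover have "x \<noteq> w" using x wL by auto
        moreover have "u \<in> cnbhd V E w" using C2 by auto
        ultimately have "\<not> (cnbhd V E x \<inter> C \<subseteq> cnbhd V E w \<inter> C)" using DLD_sep[OF C(1) xV] by blast
        then show False using Ix \<open>u \<in> cnbhd V E w\<close> \<open>u \<in> C\<close> by auto
      qed
      have Lx: "L - {x} \<subseteq> C"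
      proof
        fix y assume y: "y \<in> L - {x}"
        show "y \<in> C"
        proof (rule ccontr)
          assume "y \<notin> C"
          then have "y \<in> V - C" using y LV by auto
          moreover have "cnbhd V E y \<inter> C = {u}" using C3[of y] y \<open>y \<notin> C\<close> \<open>u \<in> C\<close> by auto
          moreover have "y \<noteq> x" using y by auto
          ultimately have "\<not> (cnbhd V E y \<inter> C \<subseteq> cnbhd V E x \<inter> C)" using DLD_sep[OF C(1) _ xV] by blast
          then show False using Ix \<open>cnbhd V E y \<inter> C = {u}\<close> by auto
        qed
      qed
      have "D = C" using wC unfolding D_def by auto
      then have g2: "gamma_DLD V' E \<le> card (C \<inter> V')" using g by simp
      moreover have "C \<inter> (L \<union> {u}) = insert u (L - {x})" using Lx x \<open>u \<in> C\<close> by auto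
      then have "card (C \<inter> (L \<union> {u})) = card L" using finL uL x(1)
        by (simp add: card_Diff_singleton)
        (metis One_nat_def Suc_pred card_gt_0_iff empty_iff)
      ultimately show ?thesis using cardsplit[OF CV] C(2) by linarith
    qed
  qed
  have uV': "u \<notin> V'" and LV': "L \<inter> V' = {}" and Vsplit: "V = V' \<union> L \<union> {u}"
    using LV uV unfolding V'_def by auto
  have finC': "finite C'" using C'V finV' finite_subset by blast
  have upper: "gamma_DLD V E \<le> gamma_DLD V' E + card L"
  proof (cases "w \<in> C'")
    case True
    obtain x where x: "x \<in> L" using Lne by blast
    have xV': "x \<notin> V'" using x LV' by blast
    define D where "D = C' \<union> (L - {x}) \<union> {u}"
    have "is_DLD V E D"
    proof (rule DLD_glue[OF C'(1) V'V, where z=x])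
      show "D \<subseteq> V" unfolding D_def using C'V V'V LV uV by blast
      show "D \<inter> V' = C'" unfolding D_def using C'V LV' uV' by blast
      show "\<forall>v\<in>V' - C'. cnbhd V E v \<inter> D = cnbhd V' E v \<inter> C'"
      proof
        fix v assume v: "v \<in> V' - C'"
        then have "v \<noteq> w" using True by auto
        then have e: "cnbhd V E v = cnbhd V' E v" using C1[of v] v by simp
        have "cnbhd V' E v \<subseteq> V'" using cnbhd_sub[of v V' E] v by auto
        then show "cnbhd V E v \<inter> D = cnbhd V' E v \<inter> C'" unfolding e D_def using LV' uV' by auto
      qed
      show "V - D = (V' - C') \<union> {x}"
      proof -
        have "V - D = (V' \<union> L \<union> {u}) - (C' \<union> (L - {x}) \<union> {u})" using Vsplit unfolding D_def by simp
        also have "\<dots> = (V' - C') \<union> {x}" using x LV' uV' C'V xV' uL by auto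
        finally show ?thesis .
      qed
      show "x \<notin> V'" by (rule xV')
      show "cnbhd V E x \<inter> D \<noteq> {}" using C3[OF x] unfolding D_def by blast
      show "cnbhd V E x \<inter> D \<inter> V' = {}" using C3[OF x] xV' uV' by auto
    qed
    then have "gamma_DLD V E \<le> card D" using gamma_le[OF fin] by blast
    moreover have "card D = card C' + card L"
    proof -
      have d1: "C' \<inter> ((L - {x}) \<union> {u}) = {}" using C'V LV' uV' by blast
      have fin2: "finite ((L - {x}) \<union> {u})" using finL by blast
      have "D = C' \<union> ((L - {x}) \<union> {u})" unfolding D_def by blast
      then have "card D = card C' + card ((L - {x}) \<union> {u})"
        using card_Un_disjoint[OF finC' fin2 d1] by simp
      moreover have "(L - {x}) \<union> {u} = insert u (L - {x})" by blast
      then have "card ((L - {x}) \<union> {u}) = Suc (card (L - {x}))" using finL uL by simp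
      moreover have "Suc (card (L - {x})) = card L" using finL x
        by (metis card_Suc_Diff1)
      ultimately show ?thesis by simp
    qed
    ultimately show ?thesis using C'(2) by simp
  next
    case False
    define D where "D = C' \<union> L"
    have "is_DLD V E D"
    proof (rule DLD_glue[OF C'(1) V'V, where z=u])
      show "D \<subseteq> V" unfolding D_def using C'V V'V LV by blast
      show "D \<inter> V' = C'" unfolding D_def using C'V LV' by blast
      show "\<forall>v\<in>V' - C'. cnbhd V E v \<inter> D = cnbhd V' E v \<inter> C'"
      proof
        fix v assume v: "v \<in> V' - C'"
        have sub: "cnbhd V' E v \<subseteq> V'" using cnbhd_sub[of v V' E] v by auto
        show "cnbhd V E v \<inter> D = cnbhd V' E v \<inter> C'"
        proof (cases "v = w")
          case True
          have e: "cnbhd V E v = insert u (cnbhd V' E v)" using C2 True by simp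
          show ?thesis unfolding e D_def using sub uL uV' LV' C'V by auto
        next
          case f: False
          have e: "cnbhd V E v = cnbhd V' E v" using C1[of v] f v by simp
          show ?thesis unfolding e D_def using sub LV' by auto
        qed
      qed
      show "V - D = (V' - C') \<union> {u}"
      proof -
        have "V - D = (V' \<union> L \<union> {u}) - (C' \<union> L)" using Vsplit unfolding D_def by simp
        also have "\<dots> = (V' - C') \<union> {u}" using uV' uL C'V LV' by auto
        finally show ?thesis .
      qed
      show "u \<notin> V'" by (rule uV')
      show "cnbhd V E u \<inter> D \<noteq> {}" using C4 Lne unfolding D_def by blast
      show "cnbhd V E u \<inter> D \<inter> V' = {}" unfolding C4 D_def using False C'V LV' uV' by blast
    qed
    then have "gamma_DLD V E \<le> card D" using gamma_le[OF fin] by blast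
    moreover have "card D = card C' + card L"
    proof -
      have d1: "C' \<inter> L = {}" using C'V LV' by blast
      show ?thesis unfolding D_def using card_Un_disjoint[OF finC' finL d1] .
    qed
    ultimately show ?thesis using C'(2) by simp
  qed
  have "gamma_DLD V' E = gamma_DLD V E - card L" using lower upper by linarith
  then show ?thesis unfolding V'_def .
qed

theorem mainTheorem12:
  fixes V :: "'a set" and E :: "'a \<Rightarrow> 'a \<Rightarrow> bool" and u :: 'a
  assumes "tree V E"
    and "support_vertex V E u"
    and "card (nbhd V E u - leaves_at V E u) = 1"
  shows "gamma_DLD (V - (leaves_at V E u \<union> {u})) E
           = gamma_DLD V E - card (leaves_at V E u)"
proof -
  define L where "L = leaves_at V E u"
  have sg: "sgraph V E" and fin: "finite V" using assms(1) unfolding tree_def sgraph_def by auto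
  have sym: "\<And>a b. E a b \<Longrightarrow> E b a" and irr: "\<And>a. \<not> E a a"
    using sg unfolding sgraph_def by blast+
  have uV: "u \<in> V" using assms(2) unfolding support_vertex_def by auto
  have Lne: "L \<noteq> {}" using assms(2) unfolding support_vertex_def L_def leaves_at_def by auto
  obtain w where w: "nbhd V E u - L = {w}" using assms(3) unfolding L_def by (meson card_1_singletonE)
  have LN: "L \<subseteq> nbhd V E u" unfolding L_def leaves_at_def by auto
  have LV: "L \<subseteq> V" using LN unfolding nbhd_def by auto
  have uL: "u \<notin> L" using LN irr unfolding nbhd_def by auto
  have wV: "w \<in> V" and wL: "w \<notin> L" and Euw: "E u w" using w unfolding nbhd_def by auto
  have wu: "w \<noteq> u" using Euw irr by auto
  have Lnb: "\<forall>x\<in>L. nbhd V E x = {u}"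
  proof
    fix x assume x: "x \<in> L"
    then have c: "card (nbhd V E x) = 1" unfolding L_def leaves_at_def leaf_def by auto
    have "u \<in> nbhd V E x" using x LN sym uV unfolding nbhd_def by auto
    then show "nbhd V E x = {u}" using c by (metis card_1_singletonE singletonD)
  qed
  have unb: "\<forall>v\<in>V. E u v \<longrightarrow> v \<in> L \<or> v = w"
    using w unfolding nbhd_def by auto
  show ?thesis using key[OF fin sg uV wV LV Lne uL wL wu Euw Lnb unb] unfolding L_def .
qed

end
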